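(* Let $\alpha \in \mathbb{R}_{>0}$ and $M_\alpha = \{f(\alpha) \mid f(x) \in \mathbb{N}_0[x,x^{-1}]\}$ as an additive monoid. Then $M_\alpha$ is an LFM if and only if it is a UFM.
   Context: $\mathbb{N}_0[x,x^{-1}]$ denotes the semiring of Laurent polynomials with coefficients in $\mathbb{N}_0$. For an atomic reduced additive monoid $M$ and nonzero $a \in M$, $\mathsf{Z}(a)$ is the set of factorizations of $a$ (formal sums of atoms, up to order, adding to $a$), and $|z|$ is the length of $z$ (number of atoms with repetition). $M$ is an LFM (length-factorial monoid) if it is atomic and for all $a \in M$ and $z,z' \in \mathsf{Z}(a)$, $|z| = |z'|$ implies $z = z'$; it is a UFM if it is atomic and $|\mathsf{Z}(a)| = 1$ for all nonzero $a$. *)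

theory Defs
  imports Complex_Main "HOL-Library.Multiset"
begin

definition M_alpha :: "real \<Rightarrow> real set" where
  "M_alpha \<alpha> = {(\<Sum>k\<in>S. of_nat (c k) * \<alpha> powi k) | (S :: int set) (c :: int \<Rightarrow> nat). finite S}"

definition atoms :: "'a::comm_monoid_add set \<Rightarrow> 'a set" where
  "atoms M = {a \<in> M. a \<noteq> 0 \<and> (\<forall>b\<in>M. \<forall>c\<in>M. a = b + c \<longrightarrow> b = 0 \<or> c = 0)}"

definition factorizations :: "'a::comm_monoid_add set \<Rightarrow> 'a \<Rightarrow> 'a multiset set" where
  "factorizations M a = {z. set_mset z \<subseteq> atoms M \<and> sum_mset z = a}"

definition atomic_monoid :: "'a::comm_monoid_add set \<Rightarrow> bool" where
  "atomic_monoid M \<longleftrightarrow> (\<forall>a\<in>M. a \<noteq> 0 \<longrightarrow> factorizations M a \<noteq> {})"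

definition LFM :: "'a::comm_monoid_add set \<Rightarrow> bool" where
  "LFM M \<longleftrightarrow> atomic_monoid M \<and>
     (\<forall>a\<in>M. \<forall>z\<in>factorizations M a. \<forall>z'\<in>factorizations M a. size z = size z' \<longrightarrow> z = z')"

definition UFM :: "'a::comm_monoid_add set \<Rightarrow> bool" where
  "UFM M \<longleftrightarrow> atomic_monoid M \<and> (\<forall>a\<in>M. a \<noteq> 0 \<longrightarrow> card (factorizations M a) = 1)"

end

theory Submission
  imports Defs
begin

lemma M_nonneg:
  assumes "\<alpha> > 0" "x \<in> M_alpha \<alpha>" shows "x \<ge> 0"
  using assms unfolding M_alpha_def by (auto intro!: sum_nonneg)

lemma M_nat: "of_nat n \<in> M_alpha \<alpha>"
  unfolding M_alpha_def
  by (rule CollectI, rule exI[of _ "{0}"], rule exI[of _ "\<lambda>_. n"]) simp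

lemma M_scale:
  assumes "\<alpha> > 0" "x \<in> M_alpha \<alpha>" shows "\<alpha> powi j * x \<in> M_alpha \<alpha>"
proof -
  obtain S c where S: "finite S" and x: "x = (\<Sum>k\<in>S. of_nat (c k) * \<alpha> powi k)"
    using assms(2) unfolding M_alpha_def by blast
  have "\<alpha> powi j * x = (\<Sum>k\<in>S. of_nat (c k) * \<alpha> powi (k + j))"
    unfolding x sum_distrib_left using assms(1)
    by (intro sum.cong) (auto simp: power_int_add)
  also have "\<dots> = (\<Sum>k\<in>(\<lambda>k. k + j) ` S. of_nat (c (k - j)) * \<alpha> powi k)"
    by (subst sum.reindex) (auto simp: inj_on_def)
  finally have e: "\<alpha> powi j * x = (\<Sum>k\<in>(\<lambda>k. k + j) ` S. of_nat (c (k - j)) * \<alpha> powi k)" .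
  show ?thesis unfolding M_alpha_def
    apply (rule CollectI)
    apply (rule exI[of _ "(\<lambda>k. k + j) ` S"])
    apply (rule exI[of _ "\<lambda>k. c (k - j)"])
    using e S by simp
qed

lemma M_add:
  assumes "x \<in> M_alpha \<alpha>" "y \<in> M_alpha \<alpha>" shows "x + y \<in> M_alpha \<alpha>"
proof -
  obtain S c where S: "finite S" and x: "x = (\<Sum>k\<in>S. of_nat (c k) * \<alpha> powi k)"
    using assms(1) unfolding M_alpha_def by blast
  obtain T d where T: "finite T" and y: "y = (\<Sum>k\<in>T. of_nat (d k) * \<alpha> powi k)"
    using assms(2) unfolding M_alpha_def by blast
  define e where "e k = (if k \<in> S then c k else 0) + (if k \<in> T then d k else 0)" for k
  have 1: "x = (\<Sum>k\<in>S \<union> T. of_nat (if k \<in> S then c k else 0) * \<alpha> powi k)"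
    unfolding x by (rule sum.mono_neutral_cong_left) (use S T in auto)
  have 2: "y = (\<Sum>k\<in>S \<union> T. of_nat (if k \<in> T then d k else 0) * \<alpha> powi k)"
    unfolding y by (rule sum.mono_neutral_cong_left) (use S T in auto)
  have "x + y = (\<Sum>k\<in>S \<union> T. of_nat (e k) * \<alpha> powi k)"
    unfolding 1 2 e_def sum.distrib[symmetric] by (simp add: algebra_simps)
  then show ?thesis unfolding M_alpha_def using S T by blast
qed

lemma atom_pos:
  assumes "\<alpha> > 0" "a \<in> atoms (M_alpha \<alpha>)" shows "a > 0"
  using assms M_nonneg[of \<alpha> a] unfolding atoms_def by force

lemma atom_scale:
  assumes "\<alpha> > 0" "a \<in> atoms (M_alpha \<alpha>)" shows "\<alpha> * a \<in> atoms (M_alpha \<alpha>)"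
proof -
  have aM: "a \<in> M_alpha \<alpha>" "a \<noteq> 0" using assms(2) unfolding atoms_def by auto
  have "\<alpha> * a \<in> M_alpha \<alpha>" using M_scale[OF assms(1) aM(1), of 1] by simp
  moreover have "\<alpha> * a \<noteq> 0" using assms(1) aM by simp
  moreover have "b = 0 \<or> c = 0" if b: "b \<in> M_alpha \<alpha>" and c: "c \<in> M_alpha \<alpha>"
    and e: "\<alpha> * a = b + c" for b c
  proof -
    have b': "\<alpha> powi (-1) * b \<in> M_alpha \<alpha>" using M_scale[OF assms(1) b] .
    have c': "\<alpha> powi (-1) * c \<in> M_alpha \<alpha>" using M_scale[OF assms(1) c] .
    have "a = \<alpha> powi (-1) * b + \<alpha> powi (-1) * c"
      using e assms(1) by (simp add: power_int_minus field_simps)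
    then have "\<alpha> powi (-1) * b = 0 \<or> \<alpha> powi (-1) * c = 0"
      using assms(2) b' c' unfolding atoms_def by blast
    then show ?thesis using assms(1) by simp
  qed
  ultimately show ?thesis unfolding atoms_def by blast
qed

lemma count_scale:
  assumes "(\<alpha>::real) \<noteq> 0"
  shows "count (image_mset ((*) \<alpha>) w) (\<alpha> * u) = count w u"
proof -
  have "(*) \<alpha> -` {\<alpha> * u} = {u}" using assms by auto
  then show ?thesis by (cases "u \<in># w") (auto simp: count_image_mset Int_insert_right not_in_iff)
qed

lemma key:
  fixes z z' :: "real multiset"
  assumes "\<alpha> > 0" "\<alpha> \<noteq> 1"
    and pos: "\<And>x. x \<in># z \<Longrightarrow> x > 0" "\<And>x. x \<in># z' \<Longrightarrow> x > 0"
    and eq: "z + image_mset ((*) \<alpha>) z' = z' + image_mset ((*) \<alpha>) z"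
  shows "z = z'"
proof (rule ccontr)
  assume ne: "z \<noteq> z'"
  define D where "D = {x. count z x \<noteq> count z' x}"
  have DS: "D \<subseteq> set_mset z \<union> set_mset z'"
    unfolding D_def by auto (metis count_inI)
  have fin: "finite D" using DS finite_subset by blast
  have Dne: "D \<noteq> {}"
  proof
    assume "D = {}"
    then have "count z x = count z' x" for x unfolding D_def by blast
    then have "z = z'" by (rule multiset_eqI)
    then show False using ne by contradiction
  qed
  have step: "\<alpha> * u \<in> D \<longleftrightarrow> u \<in> D" for u
  proof -
    have "count (z + image_mset ((*) \<alpha>) z') (\<alpha> * u) = count (z' + image_mset ((*) \<alpha>) z) (\<alpha> * u)"
      using eq by simp
    then have "count z (\<alpha> * u) + count z' u = count z' (\<alpha> * u) + count z u"
      using count_scale[of \<alpha>] assms(1) by simp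
    then show ?thesis unfolding D_def by auto
  qed
  define x where "x = Max D"
  have xD: "x \<in> D" unfolding x_def using fin Dne by simp
  have xpos: "x > 0" using xD DS pos by auto
  show False
  proof (cases "\<alpha> > 1")
    case True
    have "\<alpha> * x \<in> D" using step xD by simp
    then have "\<alpha> * x \<le> x" unfolding x_def using fin by simp
    then show False using True xpos by simp
  next
    case False
    then have a1: "\<alpha> < 1" using assms(2) by simp
    have "\<alpha> * (x / \<alpha>) = x" using assms(1) by simp
    then have "x / \<alpha> \<in> D" using step[of "x / \<alpha>"] xD by simp
    then have "x / \<alpha> \<le> x" unfolding x_def using fin by simp
    then show False using a1 xpos assms(1) by (simp add: field_simps)
  qed
qed

lemma sum_mset_pos_aux:
  fixes z :: "real multiset"
  assumes "\<And>x. x \<in># z \<Longrightarrow> x > 0" "z \<noteq> {#}"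
  shows "sum_mset z > 0"
  using assms
proof (induction z)
  case empty then show ?case by simp
next
  case (add y r)
  have "sum_mset r \<ge> 0" if "r = {#}" using that by simp
  moreover have "sum_mset r > 0" if "r \<noteq> {#}" using add that by simp
  ultimately have "sum_mset r \<ge> 0" by fastforce
  moreover have "y > 0" using add by simp
  ultimately show ?case by simp
qed

lemma fact_empty0:
  assumes "\<alpha> > 0" "z \<in> factorizations (M_alpha \<alpha>) 0" shows "z = {#}"
proof (rule ccontr)
  assume ne: "z \<noteq> {#}"
  have pos: "\<And>x. x \<in># z \<Longrightarrow> x > 0"
    using assms atom_pos unfolding factorizations_def by blast
  have "sum_mset z > 0" using sum_mset_pos_aux[OF pos ne] by blast
  then show False using assms(2) unfolding factorizations_def by simp
qed

lemma sum_mset_ones: "set_mset w \<subseteq> {1::real} \<Longrightarrow> sum_mset w = of_nat (size w)"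
  by (induction w) auto

theorem proposition5p3:
  fixes \<alpha> :: real
  assumes "\<alpha> > 0"
  shows "LFM (M_alpha \<alpha>) \<longleftrightarrow> UFM (M_alpha \<alpha>)"
proof
  assume U: "UFM (M_alpha \<alpha>)"
  have "z = z'" if a: "a \<in> M_alpha \<alpha>" and z: "z \<in> factorizations (M_alpha \<alpha>) a"
    and z': "z' \<in> factorizations (M_alpha \<alpha>) a" for a z z'
  proof (cases "a = 0")
    case True then show ?thesis using fact_empty0[OF assms] z z' by blast
  next
    case False
    then have "card (factorizations (M_alpha \<alpha>) a) = 1" using U a unfolding UFM_def by blast
    then show ?thesis using z z' by (metis card_1_singletonE singletonD)
  qed
  then show "LFM (M_alpha \<alpha>)" using U unfolding UFM_def LFM_def by blast
next
  assume L: "LFM (M_alpha \<alpha>)"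
  have uniq: "z = z'" if a: "a \<in> M_alpha \<alpha>" and z: "z \<in> factorizations (M_alpha \<alpha>) a"
    and z': "z' \<in> factorizations (M_alpha \<alpha>) a" for a z z'
  proof (cases "\<alpha> = 1")
    case True
    have at: "x = 1" if "x \<in> atoms (M_alpha \<alpha>)" for x
    proof -
      have xM: "x \<in> M_alpha 1" and x0: "x \<noteq> 0" using that True unfolding atoms_def by auto
      then obtain S c where x: "x = (\<Sum>k\<in>S. of_nat (c k) * (1::real) powi k)"
        unfolding M_alpha_def by blast
      then have "x = of_nat (\<Sum>k\<in>S. c k)" by simp
      then obtain n where n: "x = of_nat n" by blast
      with x0 have "n \<ge> 1" by (cases n) auto
      show "x = 1"
      proof (rule ccontr)
        assume "x \<noteq> 1"
        then have n2: "n \<ge> 2" using n \<open>n \<ge> 1\<close> by (cases "n = 1") auto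
        have "x = of_nat 1 + of_nat (n - 1)" using n n2 by simp
        moreover have "of_nat 1 \<in> M_alpha \<alpha>" "of_nat (n - 1) \<in> M_alpha \<alpha>" using M_nat by blast+
        ultimately have "(of_nat 1::real) = 0 \<or> (of_nat (n - 1)::real) = 0"
          using that unfolding atoms_def by blast
        then show False using n2 by simp
      qed
    qed
    have sz: "sum_mset w = of_nat (size w)" if "set_mset w \<subseteq> atoms (M_alpha \<alpha>)" for w
      by (rule sum_mset_ones) (use that at in auto)
    have "real (size z) = real (size z')" using z z' sz unfolding factorizations_def by force
    then show ?thesis using L a z z' unfolding LFM_def by simp
  next
    case False
    let ?w = "z + image_mset ((*) \<alpha>) z'" and ?w' = "z' + image_mset ((*) \<alpha>) z"
    have sc: "set_mset (image_mset ((*) \<alpha>) v) \<subseteq> atoms (M_alpha \<alpha>)"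
      if "set_mset v \<subseteq> atoms (M_alpha \<alpha>)" for v
      using that atom_scale[OF assms] by auto
    have sm: "sum_mset (image_mset ((*) \<alpha>) v) = \<alpha> * sum_mset v" for v :: "real multiset"
      by (induction v) (auto simp: algebra_simps)
    have bM: "a + \<alpha> * a \<in> M_alpha \<alpha>" using M_add[OF a M_scale[OF assms a, of 1]] by simp
    have "?w \<in> factorizations (M_alpha \<alpha>) (a + \<alpha> * a)"
      using z z' sc sm unfolding factorizations_def by auto
    moreover have "?w' \<in> factorizations (M_alpha \<alpha>) (a + \<alpha> * a)"
      using z z' sc sm unfolding factorizations_def by auto
    moreover have "size ?w = size ?w'" by simp
    ultimately have "?w = ?w'" using L bM unfolding LFM_def by blast
    moreover have "\<And>x. x \<in># z \<Longrightarrow> x > 0" "\<And>x. x \<in># z' \<Longrightarrow> x > 0"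
      using z z' atom_pos[OF assms] unfolding factorizations_def by blast+
    ultimately show ?thesis using key[OF assms False] by blast
  qed
  have "card (factorizations (M_alpha \<alpha>) a) = 1" if "a \<in> M_alpha \<alpha>" "a \<noteq> 0" for a
  proof -
    have "factorizations (M_alpha \<alpha>) a \<noteq> {}"
      using L that unfolding LFM_def atomic_monoid_def by blast
    then obtain z where "z \<in> factorizations (M_alpha \<alpha>) a" by blast
    then have "factorizations (M_alpha \<alpha>) a = {z}" using uniq[OF that(1)] by blast
    then show ?thesis by simp
  qed
  then show "UFM (M_alpha \<alpha>)" using L unfolding LFM_def UFM_def by blast
qed

end
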